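(* Let $(A,\mu,\alpha,\beta)$ be a BiHom-commutative algebra (with $\mu(a\otimes b)=a\cdot b$). Let $p$ and $r$ be natural numbers and let $D:A\to A$ be a linear map commuting with $\alpha$ and $\beta$ such that $D(a\cdot b)=\beta^r(a)\cdot D(b)+D(a)\cdot\beta^r(b)$ for all $a,b\in A$. Define $a\ast b=\alpha^p(a)\cdot D(b)$. Then $(A,\ast,\alpha^{p+1},\beta^{r+1})$ is a BiHom-Novikov algebra.
   Context: Work over a field. A BiHom-associative algebra is a 4-tuple $(A,\mu,\alpha,\beta)$ with $\alpha,\beta$ commuting linear maps, multiplicative for $\mu$, and $\alpha(x)\cdot(y\cdot z)=(x\cdot y)\cdot\beta(z)$; it is BiHom-commutative if $\beta(a)\cdot\alpha(b)=\beta(b)\cdot\alpha(a)$ for all $a,b$. A BiHom-Novikov algebra is a 4-tuple $(A,\ast,\alpha',\beta')$ with commuting linear maps $\alpha',\beta'$ multiplicative for $\ast$ such that for all $x,y,z$: $(\beta'(x)\ast\alpha'(y))\ast\beta'(z)-\alpha'\beta'(x)\ast(\alpha'(y)\ast z)=(\beta'(y)\ast\alpha'(x))\ast\beta'(z)-\alpha'\beta'(y)\ast(\alpha'(x)\ast z)$ and $(x\ast\beta'(y))\ast\alpha'\beta'(z)=(x\ast\beta'(z))\ast\alpha'\beta'(y)$. *)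

theory Defs
  imports Main "HOL.Vector_Spaces"
begin

definition bilinear_map :: "('k::field \<Rightarrow> 'v::ab_group_add \<Rightarrow> 'v) \<Rightarrow> ('v \<Rightarrow> 'v \<Rightarrow> 'v) \<Rightarrow> bool" where
  "bilinear_map scale mu \<longleftrightarrow>
     (\<forall>x. Vector_Spaces.linear scale scale (mu x)) \<and>
     (\<forall>y. Vector_Spaces.linear scale scale (\<lambda>x. mu x y))"

definition bihom_associative_algebra ::
  "('k::field \<Rightarrow> 'v::ab_group_add \<Rightarrow> 'v) \<Rightarrow> ('v \<Rightarrow> 'v \<Rightarrow> 'v) \<Rightarrow> ('v \<Rightarrow> 'v) \<Rightarrow> ('v \<Rightarrow> 'v) \<Rightarrow> bool" where
  "bihom_associative_algebra scale mu alpha beta \<longleftrightarrow>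
     vector_space scale \<and> bilinear_map scale mu \<and>
     Vector_Spaces.linear scale scale alpha \<and> Vector_Spaces.linear scale scale beta \<and>
     alpha \<circ> beta = beta \<circ> alpha \<and>
     (\<forall>x y. alpha (mu x y) = mu (alpha x) (alpha y)) \<and>
     (\<forall>x y. beta (mu x y) = mu (beta x) (beta y)) \<and>
     (\<forall>x y z. mu (alpha x) (mu y z) = mu (mu x y) (beta z))"

definition bihom_commutative_algebra ::
  "('k::field \<Rightarrow> 'v::ab_group_add \<Rightarrow> 'v) \<Rightarrow> ('v \<Rightarrow> 'v \<Rightarrow> 'v) \<Rightarrow> ('v \<Rightarrow> 'v) \<Rightarrow> ('v \<Rightarrow> 'v) \<Rightarrow> bool" where
  "bihom_commutative_algebra scale mu alpha beta \<longleftrightarrow>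
     bihom_associative_algebra scale mu alpha beta \<and>
     (\<forall>a b. mu (beta a) (alpha b) = mu (beta b) (alpha a))"

definition bihom_novikov_algebra ::
  "('k::field \<Rightarrow> 'v::ab_group_add \<Rightarrow> 'v) \<Rightarrow> ('v \<Rightarrow> 'v \<Rightarrow> 'v) \<Rightarrow> ('v \<Rightarrow> 'v) \<Rightarrow> ('v \<Rightarrow> 'v) \<Rightarrow> bool" where
  "bihom_novikov_algebra scale m al be \<longleftrightarrow>
     vector_space scale \<and> bilinear_map scale m \<and>
     Vector_Spaces.linear scale scale al \<and> Vector_Spaces.linear scale scale be \<and>
     al \<circ> be = be \<circ> al \<and>
     (\<forall>x y. al (m x y) = m (al x) (al y)) \<and>
     (\<forall>x y. be (m x y) = m (be x) (be y)) \<and>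
     (\<forall>x y z. m (m (be x) (al y)) (be z) - m (al (be x)) (m (al y) z)
             = m (m (be y) (al x)) (be z) - m (al (be y)) (m (al x) z)) \<and>
     (\<forall>x y z. m (m x (be y)) (al (be z)) = m (m x (be z)) (al (be y)))"

end

theory Submission
  imports Defs
begin

lemma lin_pow:
  assumes "Vector_Spaces.linear s s f" "vector_space s"
  shows "Vector_Spaces.linear s s (f ^^ n)"
proof (induction n)
  case 0 then show ?case using assms(2) by (simp add: linear_iff)
next
  case (Suc n)
  then show ?case using assms(1) unfolding linear_iff by simp
qed

lemma comm_pow1:
  assumes "f \<circ> g = g \<circ> f"
  shows "(f ^^ n) (g x) = g ((f ^^ n) x)"
proof (induction n)
  case (Suc n) then show ?case using assms by (simp add: fun_eq_iff)
qed simp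

lemma comm_pow:
  assumes "f \<circ> g = g \<circ> f"
  shows "(f ^^ n) ((g ^^ m) x) = (g ^^ m) ((f ^^ n) x)"
proof -
  have "(f ^^ n) \<circ> g = g \<circ> (f ^^ n)" using comm_pow1[OF assms] by (auto simp: fun_eq_iff)
  then have "g \<circ> (f ^^ n) = (f ^^ n) \<circ> g" by simp
  then show ?thesis using comm_pow1[of g "f ^^ n" m x] by simp
qed

lemma mult_pow:
  assumes "\<forall>x y. f (mu x y) = mu (f x) (f y)"
  shows "(f ^^ n) (mu x y) = mu ((f ^^ n) x) ((f ^^ n) y)"
proof (induction n)
  case (Suc n) then show ?case using assms by simp
qed simp

theorem corollary2p8:
  fixes scale :: "'k::field \<Rightarrow> 'v::ab_group_add \<Rightarrow> 'v"
    and mu :: "'v \<Rightarrow> 'v \<Rightarrow> 'v"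
    and alpha beta D :: "'v \<Rightarrow> 'v"
    and p r :: nat
  assumes "bihom_commutative_algebra scale mu alpha beta"
    and "Vector_Spaces.linear scale scale D"
    and "D \<circ> alpha = alpha \<circ> D" and "D \<circ> beta = beta \<circ> D"
    and "\<forall>a b. D (mu a b) = mu ((beta ^^ r) a) (D b) + mu (D a) ((beta ^^ r) b)"
  shows "bihom_novikov_algebra scale (\<lambda>a b. mu ((alpha ^^ p) a) (D b))
           (alpha ^^ (p + 1)) (beta ^^ (r + 1))"
proof -
  note A = assms(1)[unfolded bihom_commutative_algebra_def bihom_associative_algebra_def bilinear_map_def]
  have vs: "vector_space scale" using A by blast
  have bil1: "\<And>x. Vector_Spaces.linear scale scale (mu x)" using A by blast
  have bil2: "\<And>y. Vector_Spaces.linear scale scale (\<lambda>x. mu x y)" using A by blast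
  have la: "Vector_Spaces.linear scale scale alpha" and lb: "Vector_Spaces.linear scale scale beta"
    using A by blast+
  have ab: "alpha \<circ> beta = beta \<circ> alpha" using A by blast
  have ma: "\<forall>x y. alpha (mu x y) = mu (alpha x) (alpha y)" using A by blast
  have mb: "\<forall>x y. beta (mu x y) = mu (beta x) (beta y)" using A by blast
  have asc: "\<And>x y z. mu (alpha x) (mu y z) = mu (mu x y) (beta z)" using A by blast
  have com: "\<And>a b. mu (beta a) (alpha b) = mu (beta b) (alpha a)" using A by blast
  have abx: "\<And>x. alpha (beta x) = beta (alpha x)" using ab by (simp add: fun_eq_iff)
  have Da: "\<And>x. D (alpha x) = alpha (D x)" using assms(3) by (simp add: fun_eq_iff)
  have Db: "\<And>x. D (beta x) = beta (D x)" using assms(4) by (simp add: fun_eq_iff)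
  have Dmu: "\<And>a b. D (mu a b) = mu ((beta ^^ r) a) (D b) + mu (D a) ((beta ^^ r) b)"
    using assms(5) by blast
  define m where "m = (\<lambda>a b. mu ((alpha ^^ p) a) (D b))"
  define al where "al = alpha ^^ (p + 1)"
  define be where "be = beta ^^ (r + 1)"
  have lD: "Vector_Spaces.linear scale scale D" by (rule assms(2))
  have lap: "\<And>n. Vector_Spaces.linear scale scale (alpha ^^ n)" using lin_pow[OF la vs] .
  have lbp: "\<And>n. Vector_Spaces.linear scale scale (beta ^^ n)" using lin_pow[OF lb vs] .
  have bilin: "bilinear_map scale m"
    unfolding bilinear_map_def m_def
  proof safe
    fix x show "Vector_Spaces.linear scale scale (\<lambda>b. mu ((alpha ^^ p) x) (D b))"
      using Vector_Spaces.linear_compose[OF lD bil1[of "(alpha ^^ p) x"]] by (simp add: o_def)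
  next
    fix y show "Vector_Spaces.linear scale scale (\<lambda>x. mu ((alpha ^^ p) x) (D y))"
      using Vector_Spaces.linear_compose[OF lap[of p] bil2[of "D y"]] by (simp add: o_def)
  qed
  have Dap: "\<And>n x. D ((alpha ^^ n) x) = (alpha ^^ n) (D x)"
    using comm_pow1[OF assms(3)[symmetric]] by simp
  have Dbp: "\<And>n x. D ((beta ^^ n) x) = (beta ^^ n) (D x)"
    using comm_pow1[OF assms(4)[symmetric]] by simp
  have abp: "\<And>n k x. (alpha ^^ n) ((beta ^^ k) x) = (beta ^^ k) ((alpha ^^ n) x)"
    using comm_pow[OF ab] by simp
  have map: "\<And>n x y. (alpha ^^ n) (mu x y) = mu ((alpha ^^ n) x) ((alpha ^^ n) y)"
    using mult_pow[OF ma] by simp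
  have mbp: "\<And>n x y. (beta ^^ n) (mu x y) = mu ((beta ^^ n) x) ((beta ^^ n) y)"
    using mult_pow[OF mb] by simp
  have apa: "\<And>n m x. (alpha ^^ n) ((alpha ^^ m) x) = (alpha ^^ m) ((alpha ^^ n) x)"
    by (metis comp_apply funpow_add add.commute)
  have a1b: "\<And>k x. alpha ((beta ^^ k) x) = (beta ^^ k) (alpha x)" using abp[of 1] by simp
  have ab1: "\<And>n x. (alpha ^^ n) (beta x) = beta ((alpha ^^ n) x)" using abp[of _ 1] by simp
  have aa1: "\<And>n x. (alpha ^^ n) (alpha x) = alpha ((alpha ^^ n) x)" by (metis funpow_swap1)
  have albe: "al \<circ> be = be \<circ> al"
    unfolding al_def be_def by (simp add: fun_eq_iff abp a1b ab1 abx)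
  have mal: "\<forall>x y. al (m x y) = m (al x) (al y)"
    unfolding al_def m_def by (simp add: map Dap Da aa1 ma)
  have mbe: "\<forall>x y. be (m x y) = m (be x) (be y)"
    unfolding be_def m_def by (simp add: mbp Dbp Db abp ab1 a1b mb)
  have K2: "\<And>X Y Z. mu (mu X (beta Y)) (beta (alpha Z)) = mu (mu X (beta Z)) (beta (alpha Y))"
    by (metis asc com)
  have K1: "\<And>s t q. mu (beta (alpha s)) (mu (alpha t) q) = mu (beta (alpha t)) (mu (alpha s) q)"
    by (metis asc com abx)
  have madd: "\<And>a b c. mu a (b + c) = mu a b + mu a c"
    using bil1 unfolding linear_iff by blast
  have E1: "\<And>U d w. mu (mu (beta U) (alpha d)) (beta w) = mu (beta (alpha U)) (mu (alpha d) w)"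
    by (metis asc abx)
  note N = Da Db Dap Dbp abx a1b ab1 abp aa1 map mbp ma mb
  have nov2: "\<forall>x y z. m (m x (be y)) (al (be z)) = m (m x (be z)) (al (be y))"
    unfolding m_def al_def be_def apply (simp add: N)
    by (metis K2 a1b)
  have nov1: "\<forall>x y z. m (m (be x) (al y)) (be z) - m (al (be x)) (m (al y) z)
             = m (m (be y) (al x)) (be z) - m (al (be y)) (m (al x) z)"
    unfolding m_def al_def be_def apply (simp add: N Dmu madd)
    apply (simp only: a1b[symmetric])
    apply (simp add: E1)
    by (metis K1)
  show ?thesis
    unfolding bihom_novikov_algebra_def m_def[symmetric] al_def[symmetric] be_def[symmetric]
    using vs bilin lap[of "p+1"] lbp[of "r+1"] albe mal mbe nov1 nov2
    unfolding al_def be_def by blast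
qed

end
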